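(* Let $K$ be a finitely generated ring and $I$ a two-sided ideal of $K$ such that the additive group of $K/I$ is finitely generated. Then $I$ is finitely generated as a ring.
   Context: Rings are associative and not necessarily unital; "finitely generated ring" means generated as a ring by finitely many elements. *)

theory Defs
  imports Main
begin

text \<open>Rings are associative, not necessarily unital: Isabelle's type class ring
  (semiring + abelian additive group, no unit). The ring K is the whole type.\<close>

inductive_set ring_gen :: "'a::ring set \<Rightarrow> 'a set" for S :: "'a set" where
  base: "x \<in> S \<Longrightarrow> x \<in> ring_gen S"
| zero: "0 \<in> ring_gen S"
| add: "x \<in> ring_gen S \<Longrightarrow> y \<in> ring_gen S \<Longrightarrow> x + y \<in> ring_gen S"
| neg: "x \<in> ring_gen S \<Longrightarrow> - x \<in> ring_gen S"
| mult: "x \<in> ring_gen S \<Longrightarrow> y \<in> ring_gen S \<Longrightarrow> x * y \<in> ring_gen S"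

inductive_set add_gen :: "'a::ab_group_add set \<Rightarrow> 'a set" for F :: "'a set" where
  base: "x \<in> F \<Longrightarrow> x \<in> add_gen F"
| zero: "0 \<in> add_gen F"
| add: "x \<in> add_gen F \<Longrightarrow> y \<in> add_gen F \<Longrightarrow> x + y \<in> add_gen F"
| neg: "x \<in> add_gen F \<Longrightarrow> - x \<in> add_gen F"

definition is_ideal :: "'a::ring set \<Rightarrow> bool" where
  "is_ideal I \<longleftrightarrow> 0 \<in> I \<and> (\<forall>x\<in>I. \<forall>y\<in>I. x + y \<in> I) \<and> (\<forall>x\<in>I. - x \<in> I)
     \<and> (\<forall>k x. x \<in> I \<longrightarrow> k * x \<in> I \<and> x * k \<in> I)"

definition fg_ring :: "'a::ring itself \<Rightarrow> bool" where
  "fg_ring _ \<longleftrightarrow> (\<exists>S::'a set. finite S \<and> ring_gen S = UNIV)"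

text \<open>The additive group of K/I is finitely generated: there is a finite F whose
  cosets generate K/I, i.e. every x is congruent mod I to an element of the
  additive subgroup generated by F.\<close>
definition fg_quotient_add :: "'a::ring set \<Rightarrow> bool" where
  "fg_quotient_add I \<longleftrightarrow> (\<exists>F. finite F \<and> (\<forall>x. \<exists>g\<in>add_gen F. x - g \<in> I))"

end

theory Submission imports Defs begin

primrec nmul :: "nat \<Rightarrow> 'a::ab_group_add \<Rightarrow> 'a" where
  "nmul 0 a = 0" | "nmul (Suc k) a = a + nmul k a"

lemma nmul_add: "nmul (m + k) a = nmul m a + nmul k a"
  by (induction m) (auto simp: algebra_simps)
lemma nmul_distrib: "nmul k (x + y) = nmul k x + nmul k y"
  by (induction k) (auto simp: algebra_simps)
lemma nmul_neg: "nmul k (- x) = - nmul k x"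
  by (induction k) (auto simp: algebra_simps)
lemma nmul_diff: "nmul k (x - y) = nmul k x - nmul k y"
  using nmul_distrib[of k x "-y"] nmul_neg[of k y] by simp
lemma nmul_mult: "nmul (m * k) a = nmul m (nmul k a)"
  by (induction m) (auto simp: nmul_add nmul_distrib)
lemma nmul_comm: "nmul m (nmul k a) = nmul k (nmul m a)"
  by (metis nmul_mult mult.commute)

definition zmul :: "int \<Rightarrow> 'a::ab_group_add \<Rightarrow> 'a" where
  "zmul n a = nmul (nat n) a - nmul (nat (-n)) a"

lemma zmul_key: "zmul (int m - int k) a = nmul m a - nmul k a"
proof (cases "k \<le> m")
  case True
  then have "nmul m a = nmul (m - k) a + nmul k a" using nmul_add[of "m-k" k a] by simp
  then show ?thesis using True by (simp add: zmul_def nat_diff_distrib')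
next
  case False
  then have "nmul k a = nmul (k - m) a + nmul m a" using nmul_add[of "k-m" m a] by simp
  then show ?thesis using False by (simp add: zmul_def nat_diff_distrib')
qed

lemma int_rep: "n = int (nat n) - int (nat (-n))" by simp

lemma zmul_add: "zmul (n + m) a = zmul n a + zmul m a"
proof -
  have "n + m = int (nat n + nat m) - int (nat (-n) + nat (-m))" by simp
  then have "zmul (n+m) a = nmul (nat n + nat m) a - nmul (nat (-n) + nat (-m)) a"
    by (metis zmul_key)
  then show ?thesis by (simp add: nmul_add zmul_def algebra_simps)
qed

lemma zmul_neg: "zmul (- n) a = - zmul n a"
  by (simp add: zmul_def)

lemma zmul_distrib: "zmul k (x + y) = zmul k x + zmul k y"
  by (simp add: zmul_def nmul_distrib algebra_simps)

lemma zmul_mult: "zmul (k * d) a = zmul k (zmul d a)"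
proof -
  have "k * d = int (nat k * nat d + nat (-k) * nat (-d)) - int (nat k * nat (-d) + nat (-k) * nat d)"
    by (cases "k \<ge> 0"; cases "d \<ge> 0") (auto simp: algebra_simps)
  then have "zmul (k*d) a = nmul (nat k * nat d + nat (-k) * nat (-d)) a - nmul (nat k * nat (-d) + nat (-k) * nat d) a"
    by (metis zmul_key)
  then show ?thesis by (simp add: nmul_add nmul_mult zmul_def nmul_diff algebra_simps nmul_comm)
qed

lemma zmul_comm: "zmul k (zmul d a) = zmul d (zmul k a)"
  by (metis zmul_mult mult.commute)

lemma zmul_1[simp]: "zmul 1 a = a" by (simp add: zmul_def)
lemma zmul_0[simp]: "zmul 0 a = 0" by (simp add: zmul_def)

definition subgrp :: "'a::ab_group_add set \<Rightarrow> bool" where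
  "subgrp H \<longleftrightarrow> 0 \<in> H \<and> (\<forall>x\<in>H. \<forall>y\<in>H. x + y \<in> H) \<and> (\<forall>x\<in>H. - x \<in> H)"

lemma subgrp_diff: "subgrp H \<Longrightarrow> x \<in> H \<Longrightarrow> y \<in> H \<Longrightarrow> x - y \<in> H"
  unfolding subgrp_def by (metis diff_conv_add_uminus)

lemma subgrp_nmul: "subgrp H \<Longrightarrow> x \<in> H \<Longrightarrow> nmul k x \<in> H"
  by (induction k) (auto simp: subgrp_def)

lemma subgrp_zmul: "subgrp H \<Longrightarrow> x \<in> H \<Longrightarrow> zmul k x \<in> H"
  unfolding zmul_def by (intro subgrp_diff subgrp_nmul)

lemma subgrp_add_gen: "subgrp (add_gen F)"
  unfolding subgrp_def by (auto intro: add_gen.intros)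

lemma add_gen_least: assumes "subgrp H" "F \<subseteq> H" shows "add_gen F \<subseteq> H"
proof
  fix x assume "x \<in> add_gen F"
  then show "x \<in> H" using assms by (induction rule: add_gen.induct) (auto simp: subgrp_def)
qed

lemma add_gen_mono: "F \<subseteq> G \<Longrightarrow> add_gen F \<subseteq> add_gen G"
  by (rule add_gen_least[OF subgrp_add_gen]) (auto intro: add_gen.base)

lemma add_gen_insert:
  "x \<in> add_gen (insert a F) \<Longrightarrow> \<exists>n. \<exists>y\<in>add_gen F. x = zmul n a + y"
proof (induction rule: add_gen.induct)
  case (base x)
  then show ?case
  proof
    assume "x = a" then show ?thesis by (intro exI[of _ 1] bexI[of _ 0]) (auto intro: add_gen.zero)
  next
    assume "x \<in> F" then show ?thesis by (intro exI[of _ 0] bexI[of _ x]) (auto intro: add_gen.base)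
  qed
next
  case zero
  then show ?case by (intro exI[of _ 0] bexI[of _ 0]) (auto intro: add_gen.zero)
next
  case (add x y)
  then obtain n y1 m y2 where "y1 \<in> add_gen F" "x = zmul n a + y1" "y2 \<in> add_gen F" "y = zmul m a + y2" by blast
  then show ?case by (intro exI[of _ "n+m"] bexI[of _ "y1+y2"]) (auto simp: zmul_add algebra_simps intro: add_gen.add)
next
  case (neg x)
  then obtain n y1 where "y1 \<in> add_gen F" "x = zmul n a + y1" by blast
  then show ?case by (intro exI[of _ "-n"] bexI[of _ "-y1"]) (auto simp: zmul_neg intro: add_gen.neg)
qed

lemma sub_fg:
  fixes F :: "'a::ab_group_add set"
  assumes "finite F"
  shows "subgrp H \<Longrightarrow> \<exists>E. finite E \<and> E \<subseteq> H \<and> H \<inter> add_gen F \<subseteq> add_gen E"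
  using assms
proof (induction F rule: finite_induct)
  case empty
  have "add_gen ({}::'a set) \<subseteq> {0}" by (rule add_gen_least) (auto simp: subgrp_def)
  then show ?case by (intro exI[of _ "{}"]) (auto intro: add_gen.zero)
next
  case (insert a F)
  obtain E where E: "finite E" "E \<subseteq> H" "H \<inter> add_gen F \<subseteq> add_gen E" using insert by blast
  define N where "N = {n::int. \<exists>y\<in>add_gen F. zmul n a + y \<in> H}"
  show ?case
  proof (cases "\<exists>n\<in>N. n > 0")
    case False
    have negN: "-n \<in> N" if nN: "n \<in> N" for n
    proof -
      obtain y where "y \<in> add_gen F" "zmul n a + y \<in> H" using nN unfolding N_def by blast
      then have "- (zmul n a + y) \<in> H" "-y \<in> add_gen F" using insert(4) by (auto simp: subgrp_def intro: add_gen.neg)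
      then show ?thesis unfolding N_def by (auto simp: zmul_neg algebra_simps)
    qed
    have "H \<inter> add_gen (insert a F) \<subseteq> add_gen E"
    proof
      fix x assume x: "x \<in> H \<inter> add_gen (insert a F)"
      then obtain n y where ny: "y \<in> add_gen F" "x = zmul n a + y" using add_gen_insert by blast
      then have "n \<in> N" using x N_def by blast
      then have "n = 0" using False negN by (metis neg_0_less_iff_less linorder_neqE_linordered_idom)
      then show "x \<in> add_gen E" using ny x E by auto
    qed
    then show ?thesis using E by blast
  next
    case True
    define dn where "dn = (LEAST k::nat. int k \<in> N \<and> k > 0)"
    define d where "d = int dn"
    have ex: "\<exists>k::nat. int k \<in> N \<and> k > 0" using True by (metis pos_int_cases of_nat_0_less_iff)
    have dN: "d \<in> N \<and> d > 0" unfolding d_def dn_def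
      using LeastI_ex[OF ex] by simp
    have dmin: "\<not> (m \<in> N \<and> 0 < m)" if "m < d" for m
    proof
      assume m: "m \<in> N \<and> 0 < m"
      then obtain k :: nat where k: "m = int k" by (metis pos_int_cases)
      have "k < dn" using that k d_def by simp
      then show False using not_less_Least[of k "\<lambda>k. int k \<in> N \<and> k > 0"] m k unfolding dn_def by auto
    qed
    obtain y0 where y0: "y0 \<in> add_gen F" "zmul d a + y0 \<in> H" using dN unfolding N_def by blast
    define w where "w = zmul d a + y0"
    have "H \<inter> add_gen (insert a F) \<subseteq> add_gen (insert w E)"
    proof
      fix x assume x: "x \<in> H \<inter> add_gen (insert a F)"
      then obtain n y where ny: "y \<in> add_gen F" "x = zmul n a + y" using add_gen_insert by blast
      define q where "q = n div d"
      define r where "r = n mod d"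
      have nqr: "n = q * d + r" unfolding q_def r_def by simp
      have r0: "0 \<le> r" "r < d" using dN unfolding r_def by auto
      have wH: "zmul q w \<in> H" using subgrp_zmul[OF insert(4)] y0 w_def by blast
      have xw: "x - zmul q w = zmul r a + (y - zmul q y0)"
      proof -
        have "zmul n a = zmul q (zmul d a) + zmul r a" unfolding nqr zmul_add zmul_mult ..
        then show ?thesis unfolding ny(2) w_def zmul_distrib by (simp add: algebra_simps)
      qed
      have xwH: "x - zmul q w \<in> H" using subgrp_diff[OF insert(4)] x wH by blast
      have yq: "y - zmul q y0 \<in> add_gen F"
        using subgrp_diff[OF subgrp_add_gen] subgrp_zmul[OF subgrp_add_gen] ny y0 by blast
      have "zmul r a + (y - zmul q y0) \<in> H" using xw xwH by simp
      then have "r \<in> N" unfolding N_def using yq by blast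
      then have "r = 0" using dmin[OF r0(2)] r0(1) by auto
      then have "x - zmul q w \<in> H \<inter> add_gen F" using xw xwH yq by simp
      then have "x - zmul q w \<in> add_gen (insert w E)" using E add_gen_mono[of E "insert w E"] by blast
      moreover have "zmul q w \<in> add_gen (insert w E)"
        by (rule subgrp_zmul[OF subgrp_add_gen]) (auto intro: add_gen.base)
      ultimately have "x - zmul q w + zmul q w \<in> add_gen (insert w E)" by (rule add_gen.add)
      then show "x \<in> add_gen (insert w E)" by simp
    qed
    then show ?thesis using E y0 w_def by (intro exI[of _ "insert w E"]) auto
  qed
qed


lemma ring_gen_least: assumes "is_ideal I" "T \<subseteq> I" shows "ring_gen T \<subseteq> I"
proof
  fix x assume "x \<in> ring_gen T"
  then show "x \<in> I" using assms by (induction rule: ring_gen.induct) (auto simp: is_ideal_def)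
qed

lemma ring_gen_mono: assumes "A \<subseteq> B" "x \<in> ring_gen A" shows "x \<in> ring_gen B"
  using assms(2) by (induction rule: ring_gen.induct) (use assms(1) in \<open>auto intro: ring_gen.intros\<close>)

lemma add_gen_sub_ring_gen: "x \<in> add_gen A \<Longrightarrow> x \<in> ring_gen A"
  by (induction rule: add_gen.induct) (auto intro: ring_gen.intros)

lemma add_gen_mult_closed:
  assumes "\<And>f. f \<in> F \<Longrightarrow> P f" "P 0" "\<And>x y. P x \<Longrightarrow> P y \<Longrightarrow> P (x + y)" "\<And>x. P x \<Longrightarrow> P (- x)"
  shows "g \<in> add_gen F \<Longrightarrow> P g"
  by (induction rule: add_gen.induct) (auto intro: assms)

theorem proposition2:
  fixes I :: "'a::ring set"
  assumes "fg_ring TYPE('a)"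
    and "is_ideal I"
    and "fg_quotient_add I"
  shows "\<exists>T. finite T \<and> T \<subseteq> I \<and> ring_gen T = I"
proof -
  obtain S :: "'a set" where S: "finite S" "ring_gen S = UNIV" using assms(1) unfolding fg_ring_def by blast
  obtain F0 where F0: "finite F0" "\<forall>x. \<exists>g\<in>add_gen F0. x - g \<in> I" using assms(3) unfolding fg_quotient_add_def by blast
  define F where "F = F0 \<union> S"
  have F: "finite F" using F0 S F_def by simp
  have SF: "S \<subseteq> F" using F_def by blast
  have "\<forall>x. \<exists>g. g \<in> add_gen F \<and> x - g \<in> I" using F0 add_gen_mono[of F0 F] F_def by blast
  then obtain gg where gg: "\<And>x. gg x \<in> add_gen F" "\<And>x. x - gg x \<in> I" by metis
  define tt where "tt x = x - gg x" for x
  have ttI: "tt x \<in> I" for x using gg tt_def by simp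
  have split: "x = gg x + tt x" for x unfolding tt_def by simp
  have idl: "0 \<in> I" "\<And>x y. x \<in> I \<Longrightarrow> y \<in> I \<Longrightarrow> x + y \<in> I" "\<And>x. x \<in> I \<Longrightarrow> - x \<in> I"
     "\<And>k x. x \<in> I \<Longrightarrow> k * x \<in> I" "\<And>k x. x \<in> I \<Longrightarrow> x * k \<in> I"
    using assms(2) unfolding is_ideal_def by auto
  define T0 where "T0 = (\<lambda>(a,b). tt (a * b)) ` (F \<times> F)"
  define T1 where "T1 = (\<lambda>(f,t). f * t) ` (F \<times> T0)"
  define T2 where "T2 = (\<lambda>(t,f). t * f) ` (T0 \<times> F)"
  define T3 where "T3 = (\<lambda>(f,t,f'). f * t * f') ` (F \<times> T0 \<times> F)"
  define T where "T = T0 \<union> T1 \<union> T2 \<union> T3"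
  define L where "L = ring_gen T"
  have finT: "finite T" unfolding T_def T0_def T1_def T2_def T3_def using F by auto
  have T0I: "T0 \<subseteq> I" unfolding T0_def using ttI by auto
  have TI: "T \<subseteq> I" unfolding T_def T1_def T2_def T3_def using T0I idl by auto
  have LI: "L \<subseteq> I" unfolding L_def by (rule ring_gen_least[OF assms(2) TI])
  have TL: "x \<in> T \<Longrightarrow> x \<in> L" for x unfolding L_def by (rule ring_gen.base)
  have L0: "0 \<in> L" and Ladd: "\<And>x y. x \<in> L \<Longrightarrow> y \<in> L \<Longrightarrow> x + y \<in> L"
    and Lneg: "\<And>x. x \<in> L \<Longrightarrow> - x \<in> L" and Lmul: "\<And>x y. x \<in> L \<Longrightarrow> y \<in> L \<Longrightarrow> x * y \<in> L"
    unfolding L_def by (auto intro: ring_gen.intros)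
  have T0L: "t \<in> T0 \<Longrightarrow> t \<in> L" for t using TL T_def by blast
  have ttL: "a \<in> F \<Longrightarrow> b \<in> F \<Longrightarrow> tt (a * b) \<in> L" for a b using T0L T0_def by blast
  have T1L: "f * t \<in> L" if "f \<in> F" "t \<in> T0" for f t
  proof -
    have "f * t \<in> T1" unfolding T1_def using that by (intro image_eqI[of _ _ "(f,t)"]) auto
    then show ?thesis using TL unfolding T_def by blast
  qed
  have T2L: "t * f \<in> L" if "f \<in> F" "t \<in> T0" for f t
  proof -
    have "t * f \<in> T2" unfolding T2_def using that by (intro image_eqI[of _ _ "(t,f)"]) auto
    then show ?thesis using TL unfolding T_def by blast
  qed
  have T3L: "f * t * f' \<in> L" if "f \<in> F" "t \<in> T0" "f' \<in> F" for f t f'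
  proof -
    have "f * t * f' \<in> T3" unfolding T3_def using that by (intro image_eqI[of _ _ "(f,t,f')"]) auto
    then show ?thesis using TL unfolding T_def by blast
  qed
  have lin1: "g * t \<in> L" if "t \<in> T0" "g \<in> add_gen F" for g t
    using that(2) proof (induction g rule: add_gen.induct)
    case (base x) then show ?case using T1L that by blast
  next
    case zero then show ?case using L0 by simp
  next
    case (add x y) then show ?case using Ladd by (simp add: distrib_left distrib_right mult.assoc)
  next
    case (neg x) then show ?case using Lneg by (simp add: mult.assoc)
  qed
  have lin3: "g * t * f \<in> L" if "t \<in> T0" "f \<in> F" "g \<in> add_gen F" for g t f
    using that(3) proof (induction g rule: add_gen.induct)
    case (base x) then show ?case using T3L that by blast
  next
    case zero then show ?case using L0 by simp
  next
    case (add x y) then show ?case using Ladd by (simp add: distrib_left distrib_right mult.assoc)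
  next
    case (neg x) then show ?case using Lneg by (simp add: mult.assoc)
  qed
  have lin2: "t * g \<in> L" if "t \<in> T0" "g \<in> add_gen F" for g t
    using that(2) proof (induction g rule: add_gen.induct)
    case (base x) then show ?case using T2L that by blast
  next
    case zero then show ?case using L0 by simp
  next
    case (add x y) then show ?case using Ladd by (simp add: distrib_left distrib_right mult.assoc)
  next
    case (neg x) then show ?case using Lneg by (simp add: mult.assoc)
  qed
  have lin4: "f * t * g \<in> L" if "t \<in> T0" "f \<in> F" "g \<in> add_gen F" for g t f
    using that(3) proof (induction g rule: add_gen.induct)
    case (base x) then show ?case using T3L that by blast
  next
    case zero then show ?case using L0 by simp
  next
    case (add x y) then show ?case using Ladd by (simp add: distrib_left distrib_right mult.assoc)
  next
    case (neg x) then show ?case using Lneg by (simp add: mult.assoc)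
  qed
  have leftT: "f * x \<in> L" if fF: "f \<in> F" and xT: "x \<in> T" for f x
  proof -
    consider "x \<in> T0" | "x \<in> T1" | "x \<in> T2" | "x \<in> T3" using xT T_def by blast
    then show ?thesis
    proof cases
      case 1 then show ?thesis using fF T1L by blast
    next
      case 2
      then obtain f' t where ft: "f' \<in> F" "t \<in> T0" "x = f' * t" unfolding T1_def by auto
      have "f * x = (f * f') * t" using ft by (simp add: mult.assoc)
      also have "\<dots> = (gg (f * f') + tt (f * f')) * t" using arg_cong[OF split[of "f*f'"], of "\<lambda>z. z*t"] .
      finally have "f * x = gg (f * f') * t + tt (f * f') * t" by (simp only: distrib_right)
      then show ?thesis using lin1[OF ft(2) gg(1)] Lmul[OF ttL[OF fF ft(1)] T0L[OF ft(2)]] Ladd by simp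
    next
      case 3
      then obtain f' t where ft: "f' \<in> F" "t \<in> T0" "x = t * f'" unfolding T2_def by auto
      then show ?thesis using T3L[of f t f'] fF ft by (simp add: mult.assoc)
    next
      case 4
      then obtain f' t f'' where ft: "f' \<in> F" "t \<in> T0" "f'' \<in> F" "x = f' * t * f''" unfolding T3_def by auto
      have "f * x = (f * f') * t * f''" using ft by (simp add: mult.assoc)
      also have "\<dots> = (gg (f * f') + tt (f * f')) * t * f''" using arg_cong[OF split[of "f*f'"], of "\<lambda>z. z*t*f''"] .
      finally have eq4: "f * x = gg (f * f') * t * f'' + tt (f * f') * t * f''" by (simp only: distrib_right)
      have "t * f'' \<in> L" using ft T2L by blast
      then have "tt (f * f') * t * f'' \<in> L" using Lmul[OF ttL[OF fF ft(1)]] by (simp add: mult.assoc)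
      then show ?thesis using lin3[OF ft(2) ft(3) gg(1)] Ladd eq4 by simp
    qed
  qed
  have rightT: "x * f \<in> L" if fF: "f \<in> F" and xT: "x \<in> T" for f x
  proof -
    consider "x \<in> T0" | "x \<in> T1" | "x \<in> T2" | "x \<in> T3" using xT T_def by blast
    then show ?thesis
    proof cases
      case 1 then show ?thesis using fF T2L by blast
    next
      case 2
      then obtain f' t where ft: "f' \<in> F" "t \<in> T0" "x = f' * t" unfolding T1_def by auto
      then show ?thesis using T3L[of f' t f] fF ft by (simp add: mult.assoc)
    next
      case 3
      then obtain f' t where ft: "f' \<in> F" "t \<in> T0" "x = t * f'" unfolding T2_def by auto
      have "x * f = t * (f' * f)" using ft by (simp add: mult.assoc)
      also have "\<dots> = t * (gg (f' * f) + tt (f' * f))" using arg_cong[OF split[of "f'*f"], of "\<lambda>z. t*z"] .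
      finally have eq: "x * f = t * gg (f' * f) + t * tt (f' * f)" by (simp only: distrib_left)
      have "t * tt (f' * f) \<in> L" using Lmul[OF T0L[OF ft(2)] ttL[OF ft(1) fF]] .
      then show ?thesis using lin2[OF ft(2) gg(1)] Ladd eq by simp
    next
      case 4
      then obtain f' t f'' where ft: "f' \<in> F" "t \<in> T0" "f'' \<in> F" "x = f' * t * f''" unfolding T3_def by auto
      have "x * f = f' * t * (f'' * f)" using ft by (simp add: mult.assoc)
      also have "\<dots> = f' * t * (gg (f'' * f) + tt (f'' * f))" using arg_cong[OF split[of "f''*f"], of "\<lambda>z. f' * t * z"] .
      finally have eq: "x * f = f' * t * gg (f'' * f) + f' * t * tt (f'' * f)" by (simp only: distrib_left)
      have "f' * t * tt (f'' * f) \<in> L" using Lmul[OF T1L[OF ft(1) ft(2)] ttL[OF ft(3) fF]] .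
      then show ?thesis using lin4[OF ft(2) ft(1) gg(1)] Ladd eq by simp
    qed
  qed
  have FL: "f * x \<in> L \<and> x * f \<in> L" if fF: "f \<in> F" and xL: "x \<in> L" for f x
    using xL unfolding L_def proof (induction x rule: ring_gen.induct)
    case (base x) then show ?case using leftT rightT fF unfolding L_def by blast
  next
    case zero then show ?case using L0 unfolding L_def by simp
  next
    case (add x y) then show ?case using Ladd unfolding L_def by (simp add: distrib_left distrib_right)
  next
    case (neg x) then show ?case using Lneg unfolding L_def by simp
  next
    case (mult x y) then show ?case using Lmul unfolding L_def by (metis mult.assoc)
  qed
  have GL: "g * x \<in> L \<and> x * g \<in> L" if gF: "g \<in> add_gen F" and xL: "x \<in> L" for g x
    using gF proof (induction g rule: add_gen.induct)
    case (base f) then show ?case using FL xL by blast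
  next
    case zero then show ?case using L0 by simp
  next
    case (add a b) then show ?case using Ladd by (simp add: distrib_left distrib_right)
  next
    case (neg a) then show ?case using Lneg by simp
  qed
  define R where "R = {g + l | g l. g \<in> add_gen F \<and> l \<in> L}"
  have Radd: "x + y \<in> R" if xR: "x \<in> R" and yR: "y \<in> R" for x y
  proof -
    obtain g l g' l' where "g \<in> add_gen F" "l \<in> L" "x = g + l" "g' \<in> add_gen F" "l' \<in> L" "y = g' + l'"
      using xR yR unfolding R_def by blast
    then show ?thesis unfolding R_def
      by (intro CollectI exI[of _ "g + g'"] exI[of _ "l + l'"]) (auto simp: algebra_simps intro: add_gen.add Ladd)
  qed
  have Rneg: "- x \<in> R" if xR: "x \<in> R" for x
  proof -
    obtain g l where "g \<in> add_gen F" "l \<in> L" "x = g + l" using xR unfolding R_def by blast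
    then show ?thesis unfolding R_def
      by (intro CollectI exI[of _ "- g"] exI[of _ "- l"]) (auto intro: add_gen.neg Lneg)
  qed
  have R0: "0 \<in> R" unfolding R_def using add_gen.zero L0 by force
  have RL: "l \<in> L \<Longrightarrow> l \<in> R" for l unfolding R_def using add_gen.zero by force
  have RG: "g \<in> add_gen F \<Longrightarrow> g \<in> R" for g unfolding R_def using L0 by force
  have FF1: "f * g' \<in> R" if fF: "f \<in> F" and g'F: "g' \<in> add_gen F" for f g'
    using g'F proof (induction g' rule: add_gen.induct)
    case (base f')
    have "f * f' = gg (f * f') + tt (f * f')" by (rule split)
    then show ?case unfolding R_def using gg(1)[of "f * f'"] ttL[OF fF base] by (intro CollectI exI[of _ "gg (f * f')"] exI[of _ "tt (f * f')"]) simp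
  next
    case zero then show ?case using R0 by simp
  next
    case (add a b) then show ?case using Radd by (simp add: distrib_left)
  next
    case (neg a) then show ?case using Rneg by simp
  qed
  have FF: "g * g' \<in> R" if gF: "g \<in> add_gen F" and g'F: "g' \<in> add_gen F" for g g'
    using gF proof (induction g rule: add_gen.induct)
    case (base f) then show ?case using FF1 g'F by blast
  next
    case zero then show ?case using R0 by simp
  next
    case (add a b) then show ?case using Radd by (simp add: distrib_right)
  next
    case (neg a) then show ?case using Rneg by simp
  qed
  have Rmul: "x * y \<in> R" if xR: "x \<in> R" and yR: "y \<in> R" for x y
  proof -
    obtain g l g' l' where h: "g \<in> add_gen F" "l \<in> L" "x = g + l" "g' \<in> add_gen F" "l' \<in> L" "y = g' + l'"
      using xR yR unfolding R_def by blast
    have eq: "x * y = g * g' + (g * l' + l * g' + l * l')" unfolding h(3,6) by (simp add: algebra_simps)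
    have "g * l' + l * g' + l * l' \<in> L"
      using GL[OF h(1) h(5)] GL[OF h(4) h(2)] Lmul[OF h(2) h(5)] Ladd by simp
    then show ?thesis using eq FF[OF h(1) h(4)] Radd RL by simp
  qed
  have allR: "x \<in> R" for x
  proof -
    have "x \<in> ring_gen S" using S(2) by simp
    then show ?thesis
    proof (induction x rule: ring_gen.induct)
      case (base x) then show ?case using RG SF add_gen.base by blast
    next
      case zero then show ?case using R0 .
    next
      case (add x y) then show ?case using Radd by blast
    next
      case (neg x) then show ?case using Rneg by blast
    next
      case (mult x y) then show ?case using Rmul by blast
    qed
  qed
  have subI: "subgrp I" unfolding subgrp_def using idl by blast
  obtain E where E: "finite E" "E \<subseteq> I" "I \<inter> add_gen F \<subseteq> add_gen E" using sub_fg[OF F subI] by blast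
  define T' where "T' = T \<union> E"
  have T'I: "T' \<subseteq> I" using TI E T'_def by blast
  have "I \<subseteq> ring_gen T'"
  proof
    fix x assume xI: "x \<in> I"
    obtain g l where h: "g \<in> add_gen F" "l \<in> L" "x = g + l" using allR[of x] unfolding R_def by blast
    have "g = x - l" using h by simp
    then have "g \<in> I" using xI h(2) LI idl(2,3) by (metis diff_conv_add_uminus subsetD)
    then have "g \<in> add_gen E" using E h by blast
    then have g': "g \<in> ring_gen T'" using add_gen_sub_ring_gen ring_gen_mono[of E T'] T'_def by blast
    have "l \<in> ring_gen T'" using h(2) ring_gen_mono[of T T'] T'_def unfolding L_def by blast
    then show "x \<in> ring_gen T'" using g' h(3) ring_gen.add by blast
  qed
  then show ?thesis using ring_gen_least[OF assms(2) T'I] finT E T'_def T'I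
    by (intro exI[of _ T']) auto
qed

end
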